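(* Let $n,m$ be positive integers, $\lambda\in\mathcal{P}^m_n$, and let $k_{i,j}=k_{i,j}(\lambda)$ be defined recursively by $$k_{i,j}=\min\left\{m,\left\lceil\frac{\lambda_i-\sum_{\ell=j+1}^n k_{i,\ell}+\sum_{\ell=i+1}^j k_{\ell,j}}{j-i+1}\right\rceil\right\},\quad 1\le i\le j\le n.$$ Then $k_{i,j}\ge k_{i,j-1}$ for all $1\le i<j\le n$.
   Context: $\mathcal{P}^m_n$ is the set of integer partitions $(\lambda_1\ge\cdots\ge\lambda_n\ge0)$ with $\lambda_i\le m(n-i+1)$ for all $i$. The recursion is carried out in order of decreasing $i$ and, for fixed $i$, decreasing $j$ (the right-hand side only involves $k_{i,\ell}$ with $\ell>j$ and $k_{\ell,j}$ with $\ell>i$). *)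

theory Defs
  imports Complex_Main
begin

definition in_P :: "nat \<Rightarrow> nat \<Rightarrow> (nat \<Rightarrow> nat) \<Rightarrow> bool" where
  "in_P m n lam \<longleftrightarrow> (\<forall>i j. 1 \<le> i \<and> i \<le> j \<and> j \<le> n \<longrightarrow> lam j \<le> lam i)
     \<and> (\<forall>i. 1 \<le> i \<and> i \<le> n \<longrightarrow> lam i \<le> m * (n - i + 1))"

function kk :: "nat \<Rightarrow> nat \<Rightarrow> (nat \<Rightarrow> nat) \<Rightarrow> nat \<Rightarrow> nat \<Rightarrow> int" where
  "kk n m lam i j =
     (if 1 \<le> i \<and> i \<le> j \<and> j \<le> n then
        min (int m)
          (\<lceil>real_of_int (int (lam i) - (\<Sum>l\<in>{j+1..n}. kk n m lam i l)
                              + (\<Sum>l\<in>{i+1..j}. kk n m lam l j))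
            / real (j - i + 1)\<rceil>)
      else 0)"
  by pat_completeness auto
termination
  by (relation "measures [\<lambda>(n,m,lam,i,j). n - i, \<lambda>(n,m,lam,i,j). n - j]") auto

end

theory Submission
  imports Defs
begin

declare kk.simps[simp del]

definition RR :: "nat \<Rightarrow> nat \<Rightarrow> (nat \<Rightarrow> nat) \<Rightarrow> nat \<Rightarrow> nat \<Rightarrow> int" where
  "RR n m lam i j = (\<Sum>l\<in>{j+1..n}. kk n m lam i l)"
definition CC :: "nat \<Rightarrow> nat \<Rightarrow> (nat \<Rightarrow> nat) \<Rightarrow> nat \<Rightarrow> nat \<Rightarrow> int" where
  "CC n m lam i j = (\<Sum>l\<in>{i+1..j}. kk n m lam l j)"
definition AA :: "nat \<Rightarrow> nat \<Rightarrow> (nat \<Rightarrow> nat) \<Rightarrow> nat \<Rightarrow> nat \<Rightarrow> int" where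
  "AA n m lam i j = int (lam i) - RR n m lam i j + CC n m lam i j"

lemma kk_eq:
  assumes "1 \<le> i" "i \<le> j" "j \<le> n"
  shows "kk n m lam i j = min (int m) \<lceil>real_of_int (AA n m lam i j) / real (j - i + 1)\<rceil>"
  using assms by (subst kk.simps) (simp add: AA_def RR_def CC_def)

lemma kk_le_m:
  "kk n m lam i j \<le> int m"
  by (subst kk.simps) auto

lemma kk_le:
  assumes "1 \<le> i" "i \<le> j" "j \<le> n" "AA n m lam i j \<le> int (j - i + 1) * c"
  shows "kk n m lam i j \<le> c"
proof -
  have d: "real (j - i + 1) > 0" by simp
  have "real_of_int (AA n m lam i j) \<le> real_of_int c * real (j - i + 1)"
  proof -
    have "real_of_int (AA n m lam i j) \<le> real_of_int (int (j - i + 1) * c)"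
      using assms(4) by linarith
    then show ?thesis by (simp add: mult.commute)
  qed
  then have "real_of_int (AA n m lam i j) / real (j - i + 1) \<le> real_of_int c"
    using d by (simp add: pos_divide_le_eq)
  then have "\<lceil>real_of_int (AA n m lam i j) / real (j - i + 1)\<rceil> \<le> c"
    by (simp add: ceiling_le_iff)
  then show ?thesis using kk_eq[OF assms(1-3), of m lam] by simp
qed

lemma kk_lt_m:
  assumes "1 \<le> i" "i \<le> j" "j \<le> n" "kk n m lam i j < int m"
  shows "AA n m lam i j \<le> int (j - i + 1) * kk n m lam i j"
proof -
  have d: "real (j - i + 1) > 0" by simp
  have e: "kk n m lam i j = \<lceil>real_of_int (AA n m lam i j) / real (j - i + 1)\<rceil>"
    using kk_eq[OF assms(1-3), of m lam] assms(4) by linarith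
  have "real_of_int (AA n m lam i j) / real (j - i + 1) \<le> real_of_int (kk n m lam i j)"
    using e by (metis le_of_int_ceiling)
  then have "real_of_int (AA n m lam i j) \<le> real_of_int (kk n m lam i j) * real (j - i + 1)"
    using d by (simp add: pos_divide_le_eq)
  then have "real_of_int (AA n m lam i j) \<le> real_of_int (int (j - i + 1) * kk n m lam i j)"
    by (simp add: mult.commute)
  then show ?thesis by linarith
qed

lemma kk_ge0:
  assumes "1 \<le> i" "i \<le> j" "j \<le> n" "AA n m lam i j \<ge> 0"
  shows "kk n m lam i j \<ge> 0"
proof -
  have "real_of_int (AA n m lam i j) / real (j - i + 1) \<ge> 0" using assms(4) by simp
  then have "\<lceil>real_of_int (AA n m lam i j) / real (j - i + 1)\<rceil> \<ge> 0" by simp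
  then show ?thesis using kk_eq[OF assms(1-3), of m lam] by simp
qed

lemma kk_diag:
  assumes "1 \<le> i" "i \<le> n"
  shows "kk n m lam i i \<le> AA n m lam i i"
  using kk_le[OF assms(1) order_refl assms(2), of m lam "AA n m lam i i"] by simp


definition DD :: "nat \<Rightarrow> nat \<Rightarrow> (nat \<Rightarrow> nat) \<Rightarrow> nat \<Rightarrow> nat \<Rightarrow> int" where
  "DD n m lam i j = RR n m lam (i+1) j + int (lam i) - int (lam (i+1)) - RR n m lam i j"

lemma CC_split:
  assumes "i + 1 \<le> j"
  shows "CC n m lam i j = kk n m lam (i+1) j + CC n m lam (i+1) j"
  unfolding CC_def using assms by (simp add: sum.atLeast_Suc_atMost)

lemma RR_split:
  assumes "j < n"
  shows "RR n m lam i j = kk n m lam i (j+1) + RR n m lam i (j+1)"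
  unfolding RR_def using assms by (simp add: sum.atLeast_Suc_atMost)

lemma AA_diff:
  assumes "i + 1 \<le> j"
  shows "AA n m lam i j = AA n m lam (i+1) j + DD n m lam i j + kk n m lam (i+1) j"
  using CC_split[OF assms, of n m lam] unfolding AA_def DD_def by simp

lemma step:
  assumes "1 \<le> i" "i + 1 \<le> j" "j \<le> n" "DD n m lam i j \<ge> 0"
  shows "kk n m lam i j \<le> DD n m lam i j + kk n m lam (i+1) j"
proof (cases "kk n m lam (i+1) j < int m")
  case True
  have "AA n m lam (i+1) j \<le> int (j - (i+1) + 1) * kk n m lam (i+1) j"
    using kk_lt_m[of "i+1" j n m lam] True assms by simp
  moreover have "int (j - (i+1) + 1) + 1 = int (j - i + 1)" using assms by simp
  moreover have "DD n m lam i j \<le> int (j - i + 1) * DD n m lam i j"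
    using assms(4) by (simp add: mult_le_cancel_right1)
  ultimately have "AA n m lam i j \<le> int (j - i + 1) * (DD n m lam i j + kk n m lam (i+1) j)"
    using AA_diff[OF assms(2), of n m lam] by (simp add: algebra_simps)
  then show ?thesis using kk_le[of i j n m lam] assms by simp
next
  case False
  then show ?thesis using kk_le_m[of n m lam i j] assms(4) by simp
qed

lemma DD_nonneg:
  assumes "1 \<le> i" "i < n" "lam (i+1) \<le> lam i" "i + 1 \<le> j" "j \<le> n"
  shows "DD n m lam i j \<ge> 0"
proof -
  have "i + 1 \<le> j \<longrightarrow> DD n m lam i j \<ge> 0"
    using assms(5)
  proof (induction j rule: inc_induct)
    case base
    then show ?case using assms unfolding DD_def RR_def by simp
  next
    case (step j)
    show ?case
    proof
      assume True: "i + 1 \<le> j"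
      have "DD n m lam i j = DD n m lam i (j+1) + kk n m lam (i+1) (j+1) - kk n m lam i (j+1)"
        using RR_split[of j n m lam i] RR_split[of j n m lam "i+1"] step unfolding DD_def by simp
      moreover have "kk n m lam i (j+1) \<le> DD n m lam i (j+1) + kk n m lam (i+1) (j+1)"
        using Submission.step[of i "j+1" n m lam] assms step True by simp
      ultimately show "DD n m lam i j \<ge> 0" using step True by simp
    qed
  qed
  then show ?thesis using assms by simp
qed

lemma AA_nonneg:
  assumes mono: "\<And>i. 1 \<le> i \<Longrightarrow> i < n \<Longrightarrow> lam (i+1) \<le> lam i"
    and "1 \<le> i" "i \<le> n" "i \<le> j" "j \<le> n"
  shows "AA n m lam i j \<ge> 0"
proof -
  have "\<forall>j. 1 \<le> i \<longrightarrow> i \<le> j \<longrightarrow> j \<le> n \<longrightarrow> AA n m lam i j \<ge> 0"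
    using assms(3)
  proof (induction i rule: inc_induct)
    case base
    show ?case unfolding AA_def RR_def CC_def by simp
  next
    case (step i)
    show ?case
    proof (intro allI impI)
      fix j assume h: "1 \<le> i" "i \<le> j" "j \<le> n"
      have IH: "\<And>j. Suc i \<le> j \<Longrightarrow> j \<le> n \<Longrightarrow> AA n m lam (i+1) j \<ge> 0"
        using step.IH by simp
      show "AA n m lam i j \<ge> 0"
      proof (cases "i + 1 \<le> j")
        case True
        have "DD n m lam i j \<ge> 0" using DD_nonneg[of i n lam j m] mono h step True by simp
        moreover have "kk n m lam (i+1) j \<ge> 0"
          using kk_ge0[of "i+1" j n m lam] IH[of j] True h by simp
        ultimately show ?thesis using AA_diff[OF True, of n m lam] IH[of j] True h by simp
      next
        case False
        then have ji: "j = i" using h by simp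
        have D: "DD n m lam i (i+1) \<ge> 0" using DD_nonneg[of i n lam "i+1" m] mono h step by simp
        have A1: "AA n m lam (i+1) (i+1) \<ge> 0" using IH[of "i+1"] step by simp
        have k1: "kk n m lam i (i+1) \<le> DD n m lam i (i+1) + kk n m lam (i+1) (i+1)"
          using Submission.step[of i "i+1" n m lam] D h step by simp
        have k2: "kk n m lam (i+1) (i+1) \<le> AA n m lam (i+1) (i+1)"
          using kk_diag[of "i+1" n m lam] step by simp
        have "AA n m lam i i = AA n m lam (i+1) (i+1) + DD n m lam i (i+1) - kk n m lam i (i+1)"
          using RR_split[of i n m lam i] step unfolding AA_def DD_def CC_def by simp
        then show ?thesis using ji D A1 k1 k2 by simp
      qed
    qed
  qed
  then show ?thesis using assms by blast
qed

theorem lemma4p3: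
  fixes n m :: nat and lam :: "nat \<Rightarrow> nat"
  assumes "n \<ge> 1" and "m \<ge> 1" and "in_P m n lam"
  shows "\<forall>i j. 1 \<le> i \<and> i < j \<and> j \<le> n \<longrightarrow> kk n m lam i j \<ge> kk n m lam i (j - 1)"
proof -
  have mono: "\<And>i. 1 \<le> i \<Longrightarrow> i < n \<Longrightarrow> lam (i+1) \<le> lam i"
    using assms(3) unfolding in_P_def by simp
  have kpos: "kk n m lam i j \<ge> 0" if "1 \<le> i" "i \<le> j" "j \<le> n" for i j
  proof -
    have "AA n m lam i j \<ge> 0" by (rule AA_nonneg[of n lam]) (use mono that in auto)
    then show ?thesis using kk_ge0 that by blast
  qed
  have main: "\<forall>l. i \<le> l \<longrightarrow> l \<le> n \<longrightarrow> 1 \<le> l \<longrightarrow>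
      (\<forall>j'. l \<le> j' \<longrightarrow> Suc j' \<le> n \<longrightarrow> kk n m lam l j' \<le> kk n m lam l (Suc j'))" if "i \<le> n" for i
    using that
  proof (induction i rule: inc_induct)
    case base
    then show ?case by auto
  next
    case (step i)
    have Qi: "kk n m lam i j' \<le> kk n m lam i (Suc j')"
      if h: "1 \<le> i" "i \<le> j'" "Suc j' \<le> n" for j'
    proof (cases "kk n m lam i (Suc j') < int m")
      case True
      have A: "AA n m lam i (Suc j') \<le> int (Suc j' - i + 1) * kk n m lam i (Suc j')"
        using kk_lt_m[of i "Suc j'" n m lam] True h by simp
      have Cs: "CC n m lam i (Suc j') = (\<Sum>l\<in>{i+1..j'}. kk n m lam l (Suc j')) + kk n m lam (Suc j') (Suc j')"
        unfolding CC_def using h by simp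
      have mon: "CC n m lam i j' \<le> (\<Sum>l\<in>{i+1..j'}. kk n m lam l (Suc j'))"
        unfolding CC_def
      proof (rule sum_mono)
        fix l assume "l \<in> {i+1..j'}"
        then show "kk n m lam l j' \<le> kk n m lam l (Suc j')"
          using step.IH h by auto
      qed
      have kd: "kk n m lam (Suc j') (Suc j') \<ge> 0" using kpos h by simp
      have R: "RR n m lam i j' = kk n m lam i (Suc j') + RR n m lam i (Suc j')"
        using RR_split[of j' n m lam i] h by simp
      have "int (Suc j' - i + 1) = int (j' - i + 1) + 1" using h by simp
      then have "AA n m lam i j' \<le> int (j' - i + 1) * kk n m lam i (Suc j')"
        using A Cs mon kd R unfolding AA_def by (simp add: algebra_simps)
      then show ?thesis using kk_le[of i j' n m lam] h by simp
    next
      case False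
      then show ?thesis using kk_le_m[of n m lam i j'] by simp
    qed
    show ?case
    proof (intro allI impI)
      fix l j' assume "i \<le> l" "l \<le> n" "1 \<le> l" "l \<le> j'" "Suc j' \<le> n"
      then show "kk n m lam l j' \<le> kk n m lam l (Suc j')"
        using Qi step.IH by (cases "l = i") auto
    qed
  qed
  show ?thesis
  proof (intro allI impI)
    fix i j assume h: "1 \<le> i \<and> i < j \<and> j \<le> n"
    then obtain j' where j: "j = Suc j'" by (cases j) auto
    show "kk n m lam i j \<ge> kk n m lam i (j - 1)"
      using main[of i] h j by simp
  qed
qed

end
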